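(* Let $n\in\mathbb{N}$, $\beta\in\mathbb{R}$, $\epsilon\in\mathbb{R}^n$, $X\in\mathbb{R}^n$, $G_n\subseteq\{1,\dots,n\}$ and $o\in\mathbb{R}^n$ with $o_i=0$ for $i\notin G_n$; set $Y:=X\beta+\epsilon+o$. Let $\mathcal{U}_n\subseteq\mathcal{P}(\{1,\dots,n\})$ with $\emptyset\notin\mathcal{U}_n$ and $\mathrm{Inl}(\mathcal{U}_n):=\{S\in\mathcal{U}_n:S\cap G_n=\emptyset\}\ne\emptyset$. For $S\in\mathcal{U}_n$ and $U_n\in\mathrm{Inl}(\mathcal{U}_n)$ define $\eta_1(S):=\frac{|X_S^\top\epsilon_S|}{\|X_S\|_2^2}$ and $\eta_2(S,U_n)$ through \[ \eta_2^2(S,U_n):=\frac{1}{\|X_{S\setminus G_n}\|_2^2}\Big(\frac{|S|}{|U_n|}\|\epsilon_{U_n}\|_2^2-\|\epsilon_S\|_2^2-2\epsilon_S^\top o_S+\frac{(X_S^\top\epsilon_S)^2}{\|X_S\|_2^2}+2\frac{|X_S^\top\epsilon_S|\,|X_S^\top o_S|}{\|X_S\|_2^2}-\frac{|S|(X_{U_n}^\top\epsilon_{U_n})^2}{|U_n|\|X_{U_n}\|_2^2}\Big). \] Then \[ |\hat\beta^n_{\mathrm{BFS}}(\mathcal{U}_n)-\beta|\le\max_{S\in\mathcal{U}_n}\min_{U_n\in\mathrm{Inl}(\mathcal{U}_n)}\big(\eta_1(S)+\eta_2(S,U_n)\big). \]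
   Context: $X_S,Y_S,\epsilon_S,o_S$ denote subvectors with indices in $S$. $\hat\beta^S_{\mathrm{OLS}}(X,Y):=(X_S^\top X_S)^{+}X_S^\top Y_S$ ($^{+}$: Moore–Penrose inverse). BFS with collection $\mathcal{U}_n$: enumerate $S\in\mathcal{U}_n$ in a fixed order, compute $\mathrm{err}(S)=\frac1{|S|}\|Y_S-X_S\hat\beta^S_{\mathrm{OLS}}(X,Y)\|_2^2$, and output $\hat\beta^n_{\mathrm{BFS}}(\mathcal{U}_n):=\hat\beta^{S^*}_{\mathrm{OLS}}(X,Y)$ for the first minimizer $S^*$. Convention: a bound containing a summand with zero denominator is infinite. *)

theory Defs
  imports "HOL-Analysis.Analysis"
begin

text \<open>Vectors in R^n are functions nat => real, only indices in {1..n} matter.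
  All quantities are for a single scalar covariate X and scalar beta.\<close>

definition sqn :: "(nat \<Rightarrow> real) \<Rightarrow> nat set \<Rightarrow> real" where
  "sqn X S = (\<Sum>i\<in>S. (X i)^2)"

definition ipr :: "(nat \<Rightarrow> real) \<Rightarrow> (nat \<Rightarrow> real) \<Rightarrow> nat set \<Rightarrow> real" where
  "ipr X Z S = (\<Sum>i\<in>S. X i * Z i)"

text \<open>OLS on S: (X_S^T X_S)^+ X_S^T Y_S; for a 1x1 matrix the Moore-Penrose inverse
  is inverse (with inverse 0 = 0).\<close>
definition ols :: "(nat \<Rightarrow> real) \<Rightarrow> (nat \<Rightarrow> real) \<Rightarrow> nat set \<Rightarrow> real" where
  "ols X Y S = inverse (sqn X S) * ipr X Y S"

definition err :: "(nat \<Rightarrow> real) \<Rightarrow> (nat \<Rightarrow> real) \<Rightarrow> nat set \<Rightarrow> real" where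
  "err X Y S = (1 / real (card S)) * (\<Sum>i\<in>S. (Y i - X i * ols X Y S)^2)"

text \<open>BFS: the collection is enumerated by the list us (fixed order); the output is
  the OLS estimate on the first minimiser of err.\<close>
definition bfs :: "(nat \<Rightarrow> real) \<Rightarrow> (nat \<Rightarrow> real) \<Rightarrow> nat set list \<Rightarrow> real" where
  "bfs X Y us = ols X Y (hd (filter (\<lambda>S. \<forall>T\<in>set us. err X Y S \<le> err X Y T) us))"

definition Inl :: "nat set set \<Rightarrow> nat set \<Rightarrow> nat set set" where
  "Inl U G = {S \<in> U. S \<inter> G = {}}"

definition eta1 :: "(nat \<Rightarrow> real) \<Rightarrow> (nat \<Rightarrow> real) \<Rightarrow> nat set \<Rightarrow> ereal" where
  "eta1 X e S = (if sqn X S = 0 then \<infinity> else ereal (\<bar>ipr X e S\<bar> / sqn X S))"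

definition eta2 :: "(nat \<Rightarrow> real) \<Rightarrow> (nat \<Rightarrow> real) \<Rightarrow> (nat \<Rightarrow> real) \<Rightarrow> nat set
    \<Rightarrow> nat set \<Rightarrow> nat set \<Rightarrow> ereal" where
  "eta2 X e ov G S U =
    (if sqn X (S - G) = 0 \<or> sqn X S = 0 \<or> sqn X U = 0 \<or> card U = 0 then \<infinity>
     else ereal (sqrt ((1 / sqn X (S - G)) *
        (real (card S) / real (card U) * sqn e U - sqn e S - 2 * ipr e ov S
         + (ipr X e S)^2 / sqn X S
         + 2 * (\<bar>ipr X e S\<bar> * \<bar>ipr X ov S\<bar>) / sqn X S
         - real (card S) * (ipr X e U)^2 / (real (card U) * sqn X U)))))"

end

theory Submission
  imports Defs
begin

lemma ipr_Y:
  "ipr X (\<lambda>i. X i * b + e i + ov i) S = b * sqn X S + ipr X e S + ipr X ov S"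
  unfolding ipr_def sqn_def
  by (simp add: algebra_simps sum.distrib sum_distrib_left power2_eq_square)

lemma resid:
  assumes "sqn X S \<noteq> 0"
  shows "(\<Sum>i\<in>S. ((X i * b + e i + ov i) - X i * ols X (\<lambda>i. X i * b + e i + ov i) S)^2)
     = sqn e S + 2 * ipr e ov S + sqn ov S - (ipr X e S + ipr X ov S)^2 / sqn X S"
proof -
  define q where "q = sqn X S"
  define d where "d = (ipr X e S + ipr X ov S) / q"
  have ols: "ols X (\<lambda>i. X i * b + e i + ov i) S = b + d"
    using assms unfolding ols_def ipr_Y d_def q_def by (simp add: field_simps)
  have "(\<Sum>i\<in>S. ((X i * b + e i + ov i) - X i * (b + d))^2)
     = (\<Sum>i\<in>S. (e i)^2 + 2 * (e i * ov i) + (ov i)^2 - 2 * d * (X i * e i) - 2 * d * (X i * ov i)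
          + d^2 * (X i)^2)"
    by (rule sum.cong) (auto simp: power2_eq_square algebra_simps)
  also have "\<dots> = sqn e S + 2 * ipr e ov S + sqn ov S - 2 * d * ipr X e S - 2 * d * ipr X ov S
      + d^2 * q"
    unfolding sqn_def ipr_def q_def
    by (simp add: sum.distrib sum_subtractf sum_distrib_left)
  also have "\<dots> = sqn e S + 2 * ipr e ov S + sqn ov S - (ipr X e S + ipr X ov S)^2 / q"
    using assms unfolding d_def q_def by (simp add: field_simps power2_eq_square)
  finally show ?thesis using ols q_def by simp
qed

lemma key:
  fixes X e ov :: "nat \<Rightarrow> real" and b :: real
  defines "Y \<equiv> (\<lambda>i. X i * b + e i + ov i)"
  assumes fS: "finite S" and neS: "S \<noteq> {}" and fU: "finite U" and neU: "U \<noteq> {}"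
    and oU: "\<forall>i\<in>U. ov i = 0" and oS: "\<forall>i\<in>S - G. ov i = 0"
    and q0: "sqn X S \<noteq> 0" and qN0: "sqn X (S - G) \<noteq> 0" and qU0: "sqn X U \<noteq> 0"
    and le: "err X Y S \<le> err X Y U"
  shows "\<bar>ols X Y S - b\<bar> \<le> \<bar>ipr X e S\<bar> / sqn X S + sqrt ((1 / sqn X (S - G)) *
        (real (card S) / real (card U) * sqn e U - sqn e S - 2 * ipr e ov S
         + (ipr X e S)^2 / sqn X S
         + 2 * (\<bar>ipr X e S\<bar> * \<bar>ipr X ov S\<bar>) / sqn X S
         - real (card S) * (ipr X e U)^2 / (real (card U) * sqn X U)))"
proof -
  define q where "q = sqn X S"
  define qN where "qN = sqn X (S - G)"
  define qG where "qG = sqn X (S \<inter> G)"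
  define ae where "ae = ipr X e S"
  define ao where "ao = ipr X ov S"
  define eS where "eS = sqn e S"
  define eo where "eo = ipr e ov S"
  define oon where "oon = sqn ov S"
  define eU where "eU = sqn e U"
  define aU where "aU = ipr X e U"
  define qU where "qU = sqn X U"
  define cS where "cS = real (card S)"
  define cU where "cU = real (card U)"
  have cS: "cS > 0" using fS neS cS_def by (simp add: card_gt_0_iff)
  have cU: "cU > 0" using fU neU cU_def by (simp add: card_gt_0_iff)
  have qNnn: "qN \<ge> 0" unfolding qN_def sqn_def by (simp add: sum_nonneg)
  have qGnn: "qG \<ge> 0" unfolding qG_def sqn_def by (simp add: sum_nonneg)
  have qsplit: "q = qG + qN" unfolding q_def qG_def qN_def sqn_def
    using fS by (metis sum.Int_Diff)
  have qNp: "qN > 0" using qNnn qN0 qN_def by simp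
  have qp: "q > 0" using qsplit qGnn qNp by simp
  have ooG: "oon = sqn ov (S \<inter> G)" unfolding oon_def sqn_def
    using fS oS by (subst sum.Int_Diff[of S _ G]) auto
  have aoG: "ao = ipr X ov (S \<inter> G)" unfolding ao_def ipr_def
    using fS oS by (subst sum.Int_Diff[of S _ G]) auto
  have CS: "ao^2 \<le> qG * oon" unfolding aoG ooG qG_def ipr_def sqn_def
    by (rule Cauchy_Schwarz_ineq_sum)
  have rS: "err X Y S = (1 / cS) * (eS + 2 * eo + oon - (ae + ao)^2 / q)"
    unfolding err_def cS_def eS_def eo_def oon_def ae_def ao_def q_def Y_def
    using resid[OF q0] by simp
  have oU1: "sqn ov U = 0" "ipr e ov U = 0" "ipr X ov U = 0"
    using oU unfolding sqn_def ipr_def by auto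
  have rU: "err X Y U = (1 / cU) * (eU - aU^2 / qU)"
    unfolding err_def cU_def eU_def aU_def qU_def Y_def
    using resid[OF qU0, of b e ov] oU1 by simp
  have ineq: "eS + 2 * eo + oon - (ae + ao)^2 / q \<le> cS / cU * (eU - aU^2 / qU)"
  proof -
    have "(1 / cS) * (eS + 2 * eo + oon - (ae + ao)^2 / q) \<le> (1 / cU) * (eU - aU^2 / qU)"
      using le rS rU by simp
    hence "cS * ((1 / cS) * (eS + 2 * eo + oon - (ae + ao)^2 / q)) \<le> cS * ((1 / cU) * (eU - aU^2 / qU))"
      using cS by (intro mult_left_mono) auto
    thus ?thesis using cS by simp
  qed
  define R where "R = cS / cU * eU - eS - 2 * eo + ae^2 / q + 2 * (\<bar>ae\<bar> * \<bar>ao\<bar>) / q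
         - cS * aU^2 / (cU * qU)"
  have R1: "R = cS / cU * (eU - aU^2 / qU) - eS - 2 * eo + ae^2 / q + 2 * (\<bar>ae\<bar> * \<bar>ao\<bar>) / q"
    unfolding R_def using cU qU0 qU_def by (simp add: field_simps)
  have R2: "R \<ge> oon + (2 * (\<bar>ae\<bar> * \<bar>ao\<bar>) - 2 * ae * ao - ao^2) / q"
  proof -
    have a: "R \<ge> oon - (ae + ao)^2 / q + ae^2 / q + 2 * (\<bar>ae\<bar> * \<bar>ao\<bar>) / q"
      using ineq R1 by linarith
    have b: "0 - (ae + ao)^2 / q + ae^2 / q + 2 * (\<bar>ae\<bar> * \<bar>ao\<bar>) / q
       = (2 * (\<bar>ae\<bar> * \<bar>ao\<bar>) - 2 * ae * ao - ao^2) / q"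
      by (simp add: add_divide_distrib diff_divide_distrib power2_eq_square algebra_simps)
    show ?thesis using a b by linarith
  qed
  have "2 * (\<bar>ae\<bar> * \<bar>ao\<bar>) - 2 * ae * ao \<ge> 0"
    by (metis abs_ge_self abs_mult diff_ge_0_iff_ge mult.assoc mult_left_mono zero_le_numeral)
  hence "(2 * (\<bar>ae\<bar> * \<bar>ao\<bar>) - 2 * ae * ao - ao^2) / q \<ge> 0 - ao^2 / q"
    using qp by (simp add: divide_right_mono diff_divide_distrib)
  hence R3: "R \<ge> oon - ao^2 / q" using R2 by simp
  have R4: "oon - ao^2 / q \<ge> ao^2 * qN / q^2"
  proof -
    have "ao^2 * (q + qN) \<le> qG * oon * (q + qN)"
      using CS qp qNp by (intro mult_right_mono) auto
    also have "\<dots> \<le> oon * q^2"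
    proof -
      have "oon \<ge> 0" unfolding oon_def sqn_def by (simp add: sum_nonneg)
      moreover have "qG * (q + qN) \<le> q^2" unfolding qsplit using qNnn qGnn
        by (simp add: power2_eq_square algebra_simps)
      ultimately show ?thesis by (metis mult.commute mult.left_commute mult_left_mono)
    qed
    finally have "ao^2 * (q + qN) \<le> oon * q^2" .
    thus ?thesis using qp by (simp add: field_simps power2_eq_square)
  qed
  have sq: "\<bar>ao\<bar> / q \<le> sqrt ((1 / qN) * R)"
  proof -
    have "(\<bar>ao\<bar> / q)^2 = ao^2 * qN / q^2 / qN" using qNp qp by (simp add: power_divide)
    also have "\<dots> \<le> R / qN" proof (rule divide_right_mono)
      show "ao^2 * qN / q^2 \<le> R" using R3 R4 by linarith
    qed (use qNp in simp)
    finally have "(\<bar>ao\<bar> / q)^2 \<le> (1 / qN) * R" by simp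
    thus ?thesis by (simp add: real_le_rsqrt)
  qed
  have "ols X Y S - b = (ae + ao) / q"
    unfolding ols_def Y_def ipr_Y ae_def ao_def q_def using q0 by (simp add: field_simps)
  hence "\<bar>ols X Y S - b\<bar> \<le> \<bar>ae\<bar> / q + \<bar>ao\<bar> / q"
    using qp by (simp add: abs_triangle_ineq add_divide_distrib[symmetric] divide_right_mono)
  also have "\<dots> \<le> \<bar>ae\<bar> / q + sqrt ((1 / qN) * R)" using sq by simp
  finally show ?thesis
    unfolding R_def q_def qN_def ae_def ao_def eS_def eo_def eU_def aU_def qU_def cS_def cU_def .
qed

theorem theoremD2:
  fixes n :: nat and \<beta> :: real and \<epsilon> X ov :: "nat \<Rightarrow> real"
    and G :: "nat set" and \<U> :: "nat set set" and us :: "nat set list"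
  assumes "G \<subseteq> {1..n}"
    and "\<forall>i\<in>{1..n} - G. ov i = 0"
    and "\<U> \<subseteq> Pow {1..n}"
    and "{} \<notin> \<U>"
    and "Inl \<U> G \<noteq> {}"
    and "distinct us" and "set us = \<U>"
  shows "ereal \<bar>bfs X (\<lambda>i. X i * \<beta> + \<epsilon> i + ov i) us - \<beta>\<bar>
    \<le> Max ((\<lambda>S. Min ((\<lambda>U. eta1 X \<epsilon> S + eta2 X \<epsilon> ov G S U) ` Inl \<U> G)) ` \<U>)"
proof -
  define Y where "Y = (\<lambda>i. X i * \<beta> + \<epsilon> i + ov i)"
  define P where "P = (\<lambda>S. \<forall>T\<in>set us. err X Y S \<le> err X Y T)"
  have fin: "finite \<U>" using assms(3) finite_subset by (metis finite_Pow_iff finite_atLeastAtMost)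
  have Inl_sub: "Inl \<U> G \<subseteq> \<U>" unfolding Inl_def by auto
  have finI: "finite (Inl \<U> G)" using fin Inl_sub finite_subset by blast
  have neU: "\<U> \<noteq> {}" using assms(5) Inl_sub by blast
  obtain S0 where S0: "S0 \<in> \<U>" "err X Y S0 = Min (err X Y ` \<U>)"
  proof -
    have "Min (err X Y ` \<U>) \<in> err X Y ` \<U>" using fin neU by (intro Min_in) auto
    thus ?thesis using that by (metis imageE)
  qed
  have "P S0" unfolding P_def using S0 fin assms(7) by auto
  hence ne: "filter P us \<noteq> []" using S0 assms(7) by (auto simp: filter_empty_conv)
  define S where "S = hd (filter P us)"
  have "S \<in> set (filter P us)" unfolding S_def using ne by (cases "filter P us") auto
  hence SU: "S \<in> \<U>" and PS: "P S" using assms(7) by auto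
  have bfs: "bfs X Y us = ols X Y S" unfolding bfs_def S_def P_def by simp
  have neS: "S \<noteq> {}" and subS: "S \<subseteq> {1..n}"
    using SU assms(3,4) by auto
  have fS: "finite S" using subS finite_subset finite_atLeastAtMost by blast
  have oS: "\<forall>i\<in>S - G. ov i = 0" using subS assms(2) by auto
  have bound: "ereal \<bar>ols X Y S - \<beta>\<bar> \<le> eta1 X \<epsilon> S + eta2 X \<epsilon> ov G S U"
    if U: "U \<in> Inl \<U> G" for U
  proof -
    have UU: "U \<in> \<U>" and UG: "U \<inter> G = {}" using U unfolding Inl_def by auto
    have neU: "U \<noteq> {}" and subU: "U \<subseteq> {1..n}"
      using UU assms(3,4) by auto
    have fU: "finite U" using subU finite_subset finite_atLeastAtMost by blast
    have oU: "\<forall>i\<in>U. ov i = 0" using subU UG assms(2) by auto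
    have le: "err X Y S \<le> err X Y U" using PS UU assms(7) unfolding P_def by auto
    show ?thesis
    proof (cases "sqn X S = 0")
      case True
      then show ?thesis by (simp add: eta1_def eta2_def)
    next
      case q0: False
      show ?thesis
      proof (cases "sqn X (S - G) = 0 \<or> sqn X U = 0 \<or> card U = 0")
        case True
        then show ?thesis using q0 by (auto simp: eta1_def eta2_def)
      next
        case False
        hence qN0: "sqn X (S - G) \<noteq> 0" and qU0: "sqn X U \<noteq> 0" by auto
        have k: "\<bar>ols X Y S - \<beta>\<bar> \<le> \<bar>ipr X \<epsilon> S\<bar> / sqn X S + sqrt ((1 / sqn X (S - G)) *
        (real (card S) / real (card U) * sqn \<epsilon> U - sqn \<epsilon> S - 2 * ipr \<epsilon> ov S
         + (ipr X \<epsilon> S)^2 / sqn X S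
         + 2 * (\<bar>ipr X \<epsilon> S\<bar> * \<bar>ipr X ov S\<bar>) / sqn X S
         - real (card S) * (ipr X \<epsilon> U)^2 / (real (card U) * sqn X U)))"
          using key[OF fS neS fU neU oU oS q0 qN0 qU0] le unfolding Y_def by blast
        show ?thesis using k q0 False by (simp add: eta1_def eta2_def)
      qed
    qed
  qed
  have "ereal \<bar>ols X Y S - \<beta>\<bar> \<le> Min ((\<lambda>U. eta1 X \<epsilon> S + eta2 X \<epsilon> ov G S U) ` Inl \<U> G)"
    using finI assms(5) bound by (intro Min.boundedI) auto
  also have "\<dots> \<le> Max ((\<lambda>S. Min ((\<lambda>U. eta1 X \<epsilon> S + eta2 X \<epsilon> ov G S U) ` Inl \<U> G)) ` \<U>)"
    using fin SU by (intro Max_ge) auto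
  finally show ?thesis using bfs unfolding Y_def by simp
qed

end
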